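(* Let $q$ be a prime power and let $\mathcal{F}=(\mathcal{F}_1,\ldots,\mathcal{F}_r)$ be a flag on $\mathbb{F}_{q^n}$. Then $$\mathrm{Stab}^+(\mathcal{F})=\mathrm{Stab}(\mathcal{F})\cup\{0\}=\bigcap_{i=1}^r\mathrm{Stab}^+(\mathcal{F}_i),$$ and every subspace $\mathcal{F}_i$ is a vector space over $\mathrm{Stab}^+(\mathcal{F})$. Moreover, if $1\in\mathcal{F}_1$, then $\mathrm{Stab}^+(\mathcal{F})$ is contained in every subspace $\mathcal{F}_i$, $1\le i\le r$.
   Context: $\mathbb{F}_{q^n}$ is regarded as an $\mathbb{F}_q$-vector space. A flag on $\mathbb{F}_{q^n}$ is a sequence $(\mathcal{F}_1,\ldots,\mathcal{F}_r)$ of $\mathbb{F}_q$-subspaces with $\{0\}\subsetneq\mathcal{F}_1\subsetneq\cdots\subsetneq\mathcal{F}_r\subsetneq\mathbb{F}_{q^n}$. For $\gamma\in\mathbb{F}_{q^n}^*$ and an $\mathbb{F}_q$-subspace $\mathcal{U}$, $\mathcal{U}\gamma=\{u\gamma:u\in\mathcal{U}\}$, and $\mathcal{F}\gamma=(\mathcal{F}_1\gamma,\ldots,\mathcal{F}_r\gamma)$. The stabilizers under the full group $\mathbb{F}_{q^n}^*$ are $\mathrm{Stab}(\mathcal{U})=\{\gamma\in\mathbb{F}_{q^n}^*:\mathcal{U}\gamma=\mathcal{U}\}$ and $\mathrm{Stab}(\mathcal{F})=\{\gamma\in\mathbb{F}_{q^n}^*:\mathcal{F}\gamma=\mathcal{F}\}$.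 The stabilizer subfield $\mathrm{Stab}^+(\mathcal{U})$ (resp. $\mathrm{Stab}^+(\mathcal{F})$) is the smallest subfield of $\mathbb{F}_{q^n}$ containing both $\mathbb{F}_q$ and $\mathrm{Stab}(\mathcal{U})$ (resp. $\mathrm{Stab}(\mathcal{F})$). *)

theory Defs
  imports "HOL-Computational_Algebra.Primes"
begin

text \<open>The ambient field F_{q^n} is the (finite) type 'a; the base field F_q is a
  subfield K of it.\<close>

definition subfield :: "'a::field set \<Rightarrow> bool" where
  "subfield L \<longleftrightarrow> 0 \<in> L \<and> 1 \<in> L \<and>
     (\<forall>x\<in>L. \<forall>y\<in>L. x + y \<in> L \<and> x * y \<in> L) \<and>
     (\<forall>x\<in>L. - x \<in> L) \<and> (\<forall>x\<in>L. x \<noteq> 0 \<longrightarrow> inverse x \<in> L)"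

definition subspace_over :: "'a::field set \<Rightarrow> 'a set \<Rightarrow> bool" where
  "subspace_over L U \<longleftrightarrow> 0 \<in> U \<and> (\<forall>x\<in>U. \<forall>y\<in>U. x + y \<in> U) \<and>
     (\<forall>c\<in>L. \<forall>u\<in>U. c * u \<in> U)"

definition is_flag :: "'a::field set \<Rightarrow> nat \<Rightarrow> (nat \<Rightarrow> 'a set) \<Rightarrow> bool" where
  "is_flag K r F \<longleftrightarrow> (\<forall>i\<in>{1..r}. subspace_over K (F i)) \<and>
     (r \<ge> 1 \<longrightarrow> {0} \<subset> F 1 \<and> F r \<subset> UNIV) \<and>
     (\<forall>i\<in>{1..<r}. F i \<subset> F (Suc i))"

definition mult_set :: "'a::field set \<Rightarrow> 'a \<Rightarrow> 'a set" where
  "mult_set U \<gamma> = (\<lambda>u. u * \<gamma>) ` U"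

definition Stab :: "'a::field set \<Rightarrow> 'a set" where
  "Stab U = {\<gamma>. \<gamma> \<noteq> 0 \<and> mult_set U \<gamma> = U}"

definition Stab_flag :: "nat \<Rightarrow> (nat \<Rightarrow> 'a::field set) \<Rightarrow> 'a set" where
  "Stab_flag r F = {\<gamma>. \<gamma> \<noteq> 0 \<and> (\<forall>i\<in>{1..r}. mult_set (F i) \<gamma> = F i)}"

definition gen_subfield :: "'a::field set \<Rightarrow> 'a set \<Rightarrow> 'a set" where
  "gen_subfield K S = \<Inter> {L. subfield L \<and> K \<subseteq> L \<and> S \<subseteq> L}"

end

theory Submission
  imports Defs
begin

definition AA :: "'a::field set \<Rightarrow> 'a set" where
  "AA U = {g. \<forall>u\<in>U. g * u \<in> U}"

lemma stab_iff:
  fixes U :: "'a::{finite,field} set"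
  assumes "g \<noteq> 0"
  shows "mult_set U g = U \<longleftrightarrow> g \<in> AA U"
proof
  assume h: "mult_set U g = U"
  show "g \<in> AA U" unfolding AA_def mem_Collect_eq
  proof
    fix u assume "u \<in> U"
    then have "u * g \<in> mult_set U g" unfolding mult_set_def by blast
    then show "g * u \<in> U" using h by (simp add: mult.commute)
  qed
next
  assume h: "g \<in> AA U"
  have sub: "mult_set U g \<subseteq> U" using h unfolding AA_def mult_set_def
    by (auto simp: mult.commute)
  have "inj_on (\<lambda>u. u * g) U" using assms by (auto simp: inj_on_def)
  then have "card (mult_set U g) = card U" unfolding mult_set_def by (simp add: card_image)
  then show "mult_set U g = U" using sub by (simp add: card_subset_eq)
qed

lemma AA_subfield:
  fixes U :: "'a::{finite,field} set"
  assumes K: "subfield K" and U: "subspace_over K U"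
  shows "subfield (AA U) \<and> K \<subseteq> AA U"
proof -
  have inv: "inverse g \<in> AA U" if g: "g \<in> AA U" "g \<noteq> 0" for g
  proof -
    have e: "mult_set U g = U" using stab_iff g by blast
    show ?thesis unfolding AA_def mem_Collect_eq
    proof
      fix u assume "u \<in> U"
      then obtain v where v: "v \<in> U" "u = v * g" using e unfolding mult_set_def by blast
      have "inverse g * (v * g) = v" using g(2) by (metis mult.commute mult.assoc left_inverse mult_1_left)
      then show "inverse g * u \<in> U" using v by metis
    qed
  qed
  have U0: "0 \<in> U" and Uadd: "\<And>x y. x \<in> U \<Longrightarrow> y \<in> U \<Longrightarrow> x + y \<in> U"
    and Usc: "\<And>c u. c \<in> K \<Longrightarrow> u \<in> U \<Longrightarrow> c * u \<in> U"
    using U unfolding subspace_over_def by blast+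
  have m1: "-1 \<in> K" using K unfolding subfield_def by blast
  have AAI: "g \<in> AA U" if "\<And>u. u \<in> U \<Longrightarrow> g * u \<in> U" for g
    using that unfolding AA_def by blast
  have AAD: "g * u \<in> U" if "g \<in> AA U" "u \<in> U" for g u
    using that unfolding AA_def by blast
  have "subfield (AA U)"
    unfolding subfield_def
  proof (intro conjI ballI impI)
    show "0 \<in> AA U" by (rule AAI) (simp add: U0)
    show "1 \<in> AA U" by (rule AAI) simp
    fix x y assume x: "x \<in> AA U" and y: "y \<in> AA U"
    show "x + y \<in> AA U"
    proof (rule AAI)
      fix u assume u: "u \<in> U"
      have "(x + y) * u = x * u + y * u" by (simp add: distrib_right)
      then show "(x + y) * u \<in> U" using Uadd[OF AAD[OF x u] AAD[OF y u]] by simp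
    qed
    show "x * y \<in> AA U"
    proof (rule AAI)
      fix u assume u: "u \<in> U"
      have "(x * y) * u = x * (y * u)" by (simp add: mult.assoc)
      then show "(x * y) * u \<in> U" using AAD[OF x AAD[OF y u]] by (simp add: mult.assoc)
    qed
  next
    fix x assume x: "x \<in> AA U"
    show "- x \<in> AA U"
    proof (rule AAI)
      fix u assume u: "u \<in> U"
      have "(- x) * u = (-1) * (x * u)" by simp
      then show "(- x) * u \<in> U" using Usc[OF m1 AAD[OF x u]] by simp
    qed
  next
    fix x assume "x \<in> AA U" "x \<noteq> 0" then show "inverse x \<in> AA U" using inv by blast
  qed
  moreover have "K \<subseteq> AA U"
  proof
    fix c assume c: "c \<in> K"
    show "c \<in> AA U" by (rule AAI) (rule Usc[OF c])
  qed
  ultimately show ?thesis by blast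
qed

lemma subfield_INT:
  assumes "\<forall>i\<in>I. subfield (G i)"
  shows "subfield (\<Inter>i\<in>I. G i)"
  unfolding subfield_def
proof (intro conjI ballI impI)
  have h: "\<And>i. i \<in> I \<Longrightarrow> subfield (G i)" using assms by blast
  show "0 \<in> (\<Inter>i\<in>I. G i)" using h unfolding subfield_def by blast
  show "1 \<in> (\<Inter>i\<in>I. G i)" using h unfolding subfield_def by blast
  fix x y assume x: "x \<in> (\<Inter>i\<in>I. G i)" and y: "y \<in> (\<Inter>i\<in>I. G i)"
  show "x + y \<in> (\<Inter>i\<in>I. G i)"
  proof
    fix i assume i: "i \<in> I"
    then show "x + y \<in> G i" using h[OF i] x y unfolding subfield_def by blast
  qed
  show "x * y \<in> (\<Inter>i\<in>I. G i)"
  proof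
    fix i assume i: "i \<in> I"
    then show "x * y \<in> G i" using h[OF i] x y unfolding subfield_def by blast
  qed
next
  have h: "\<And>i. i \<in> I \<Longrightarrow> subfield (G i)" using assms by blast
  fix x assume x: "x \<in> (\<Inter>i\<in>I. G i)"
  show "- x \<in> (\<Inter>i\<in>I. G i)"
  proof
    fix i assume i: "i \<in> I"
    then show "- x \<in> G i" using h[OF i] x unfolding subfield_def by blast
  qed
  assume nz: "x \<noteq> 0"
  show "inverse x \<in> (\<Inter>i\<in>I. G i)"
  proof
    fix i assume i: "i \<in> I"
    then show "inverse x \<in> G i" using h[OF i] x nz unfolding subfield_def by blast
  qed
qed

lemma gen_eq:
  assumes "subfield L" "K \<subseteq> L" "S \<subseteq> L" "L \<subseteq> S \<union> {0}"
  shows "gen_subfield K S = L"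
proof
  show "gen_subfield K S \<subseteq> L" using assms unfolding gen_subfield_def by blast
  show "L \<subseteq> gen_subfield K S"
  proof
    fix x assume x: "x \<in> L"
    show "x \<in> gen_subfield K S" unfolding gen_subfield_def
    proof (rule InterI)
      fix M assume "M \<in> {L. subfield L \<and> K \<subseteq> L \<and> S \<subseteq> L}"
      then have M: "subfield M" "S \<subseteq> M" by auto
      have "0 \<in> M" using M(1) unfolding subfield_def by simp
      then show "x \<in> M" using x assms(4) M(2) by blast
    qed
  qed
qed

lemma flag_mono:
  assumes "is_flag K r F" "1 \<le> i" "i \<le> r"
  shows "F 1 \<subseteq> F i"
  using assms(2,3)
proof (induction i rule: dec_induct)
  case base then show ?case by simp
next
  case (step m)
  then have "F m \<subset> F (Suc m)" using assms(1) unfolding is_flag_def by auto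
  moreover have "m \<le> r" using step by simp
  then have "F 1 \<subseteq> F m" using step.IH by blast
  ultimately show ?case by (meson psubset_imp_subset subset_trans)
qed

theorem proposition3p7:
  fixes K :: "'a::{finite,field} set" and q n r :: nat and F :: "nat \<Rightarrow> 'a set"
  assumes "\<exists>p k. prime p \<and> k > 0 \<and> q = p ^ k"
    and "subfield K" and "card K = q"
    and "n \<ge> 1" and "card (UNIV :: 'a set) = q ^ n"
    and "is_flag K r F"
  shows "gen_subfield K (Stab_flag r F) = Stab_flag r F \<union> {0}
       \<and> Stab_flag r F \<union> {0} = (\<Inter>i\<in>{1..r}. gen_subfield K (Stab (F i)))
       \<and> (\<forall>i\<in>{1..r}. subspace_over (gen_subfield K (Stab_flag r F)) (F i))
       \<and> (r \<ge> 1 \<longrightarrow> 1 \<in> F 1 \<longrightarrow> (\<forall>i\<in>{1..r}. gen_subfield K (Stab_flag r F) \<subseteq> F i))"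
proof -
  have sub: "\<forall>i\<in>{1..r}. subspace_over K (F i)" using assms(6) unfolding is_flag_def by blast
  have Ai: "\<forall>i\<in>{1..r}. subfield (AA (F i)) \<and> K \<subseteq> AA (F i)"
    using AA_subfield assms(2) sub by blast
  have zero: "\<forall>i\<in>{1..r}. 0 \<in> AA (F i)" using Ai unfolding subfield_def by blast
  define L where "L = (\<Inter>i\<in>{1..r}. AA (F i))"
  have SL: "Stab_flag r F = L - {0}"
    unfolding Stab_flag_def L_def using stab_iff by auto
  have L0: "0 \<in> L" using zero unfolding L_def by blast
  have SL2: "Stab_flag r F \<union> {0} = L" using SL L0 by blast
  have Lsf: "subfield L" unfolding L_def by (rule subfield_INT) (use Ai in blast)
  have KL: "K \<subseteq> L" unfolding L_def using Ai by blast
  have G: "gen_subfield K (Stab_flag r F) = L"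
  proof (rule gen_eq[OF Lsf KL])
    show "Stab_flag r F \<subseteq> L" unfolding SL by (rule Diff_subset)
    show "L \<subseteq> Stab_flag r F \<union> {0}" unfolding SL by blast
  qed
  have Gi: "gen_subfield K (Stab (F i)) = AA (F i)" if "i \<in> {1..r}" for i
  proof (rule gen_eq)
    show "subfield (AA (F i))" "K \<subseteq> AA (F i)" using Ai that by auto
    show "Stab (F i) \<subseteq> AA (F i)"
    proof
      fix g assume "g \<in> Stab (F i)"
      then have "g \<noteq> 0" "mult_set (F i) g = F i" unfolding Stab_def by auto
      then show "g \<in> AA (F i)" using stab_iff by blast
    qed
    show "AA (F i) \<subseteq> Stab (F i) \<union> {0}"
    proof
      fix g assume g: "g \<in> AA (F i)"
      show "g \<in> Stab (F i) \<union> {0}"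
      proof (cases "g = 0")
        case False
        then have "mult_set (F i) g = F i" using stab_iff g by blast
        then show ?thesis using False unfolding Stab_def by blast
      qed simp
    qed
  qed
  have P2: "Stab_flag r F \<union> {0} = (\<Inter>i\<in>{1..r}. gen_subfield K (Stab (F i)))"
  proof -
    have "(\<Inter>i\<in>{1..r}. gen_subfield K (Stab (F i))) = L"
      unfolding L_def using Gi by (intro INF_cong) auto
    then show ?thesis using SL2 by simp
  qed
  have P3: "\<forall>i\<in>{1..r}. subspace_over (gen_subfield K (Stab_flag r F)) (F i)"
  proof
    fix i assume i: "i \<in> {1..r}"
    have si: "subspace_over K (F i)" using sub i by blast
    have LA: "L \<subseteq> AA (F i)" unfolding L_def using i by blast
    show "subspace_over (gen_subfield K (Stab_flag r F)) (F i)"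
      unfolding G subspace_over_def
    proof (intro conjI ballI)
      show "0 \<in> F i" using si unfolding subspace_over_def by blast
      fix x y assume "x \<in> F i" "y \<in> F i"
      then show "x + y \<in> F i" using si unfolding subspace_over_def by blast
    next
      fix c u assume "c \<in> L" "u \<in> F i"
      then show "c * u \<in> F i" using LA unfolding AA_def by blast
    qed
  qed
  have P4: "r \<ge> 1 \<longrightarrow> 1 \<in> F 1 \<longrightarrow> (\<forall>i\<in>{1..r}. gen_subfield K (Stab_flag r F) \<subseteq> F i)"
  proof (intro impI ballI subsetI)
    fix i x assume r: "r \<ge> 1" and one: "1 \<in> F 1" and i: "i \<in> {1..r}"
      and x: "x \<in> gen_subfield K (Stab_flag r F)"
    have "1 \<in> F i" using flag_mono[OF assms(6)] i one by auto
    moreover have "x \<in> AA (F i)" using x i unfolding G L_def by blast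
    ultimately show "x \<in> F i" unfolding AA_def by force
  qed
  show ?thesis
  proof (intro conjI)
    show "gen_subfield K (Stab_flag r F) = Stab_flag r F \<union> {0}" using G SL2 by simp
  qed (fact P2 P3 P4)+
qed

end
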